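(* For every integer $n\ge 1$ and every real (or complex) number $t$, $$\det\bigl(C_{n,t}\cdot_L D_{n,t}\bigr) \;=\; -\bigl(F_{n+1}t+F_n\bigr)\bigl(F_{2n-1}t+F_{2n}\bigr)\;=\;-F_{n+1}F_{2n-1}\,t^{2}-\bigl(F_{n+1}F_{2n}+F_{n}F_{2n-1}\bigr)t-F_{n}F_{2n}.$$ In particular the first terms are $-t^2-2t-1,\ -4t^2-8t-3,\ -15t^2-34t-16$ for $n=1,2,3$.
   Context: $F_k$ denotes the Fibonacci numbers: $F_0=0$, $F_1=F_2=1$, $F_k=F_{k-1}+F_{k-2}$. Lorentz matrix product: for $A=[a_{ij}]$ of size $m\times n$ and $B=[b_{jk}]$ of size $n\times p$, $A\cdot_L B$ is the $m\times p$ matrix with $(i,k)$ entry $-a_{i1}b_{1k}+\sum_{j=2}^{n}a_{ij}b_{jk}$ (equivalently $A\cdot_L B=A\,\mathrm{diag}(-1,1,\dots,1)\,B$). $C_{n,t}$ is the $n\times n$ matrix with entries $c_{ij}$: $c_{ii}=2$ for $1\le i\le n-1$, $c_{nn}=t+1$, $c_{i,i+1}=1$ for $1\le i\le n-1$, $c_{ij}=1$ for all $i>j$, and $c_{ij}=0$ for $j>i+1$. (For $n=1$, $C_{1,t}=(t+1)$.) $D_{n,t}$ is the $n\times n$ matrix obtained from $C_{n,t}$ by replacing every superdiagonal entry $1$ by $-1$: entries $d_{ii}=2$ for $i\le n-1$, $d_{nn}=t+1$, $d_{i,i+1}=-1$, $d_{ij}=1$ for $i>j$, $d_{ij}=0$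 for $j>i+1$. (For $n=1$, $D_{1,t}=(t+1)$.) *)

theory Defs
  imports "Jordan_Normal_Form.Determinant" "HOL-Number_Theory.Fib"
begin

(* Matrices are 0-indexed here: entry (i,j) with 0 <= i,j < n corresponds to the paper's
   entry (i+1, j+1). *)

definition C_mat :: "nat \<Rightarrow> complex \<Rightarrow> complex mat" where
  "C_mat n t = mat n n (\<lambda>(i,j).
     if i = j then (if i = n - 1 then t + 1 else 2)
     else if j = i + 1 then 1
     else if i > j then 1
     else 0)"

definition D_mat :: "nat \<Rightarrow> complex \<Rightarrow> complex mat" where
  "D_mat n t = mat n n (\<lambda>(i,j).
     if i = j then (if i = n - 1 then t + 1 else 2)
     else if j = i + 1 then -1
     else if i > j then 1
     else 0)"

(* Lorentz matrix product: A *_L B = A * diag(-1,1,...,1) * B *)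
definition lorentz_mult :: "complex mat \<Rightarrow> complex mat \<Rightarrow> complex mat" where
  "lorentz_mult A B = mat (dim_row A) (dim_col B) (\<lambda>(i,k).
     - A $$ (i,0) * B $$ (0,k) + (\<Sum>j\<in>{1..<dim_col A}. A $$ (i,j) * B $$ (j,k)))"

end

theory Submission
  imports Defs
begin

definition tri :: "nat \<Rightarrow> (nat \<Rightarrow> complex) \<Rightarrow> complex \<Rightarrow> complex \<Rightarrow> complex mat" where
"tri m a b c = mat m m (\<lambda>(i,j). if i = j then a i else if i = j+1 then b else if j = i+1 then c else 0)"

lemma tri_carrier[simp]: "tri m a b c \<in> carrier_mat m m" by (simp add: tri_def)

lemma tri_cong: "(\<And>i. i < m \<Longrightarrow> a i = a' i) \<Longrightarrow> tri m a b c = tri m a' b c"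
  by (rule eq_matI) (auto simp: tri_def)

lemma continuant:
  "det (tri (Suc (Suc m)) a b c) = a (Suc m) * det (tri (Suc m) a b c) - b * c * det (tri m a b c)"
proof -
  define A where "A = tri (Suc (Suc m)) a b c"
  have A: "A \<in> carrier_mat (Suc (Suc m)) (Suc (Suc m))" by (simp add: A_def)
  have "det A = (\<Sum>j<Suc (Suc m). A $$ (Suc m,j) * cofactor A (Suc m) j)"
    by (rule laplace_expansion_row[OF A]) simp
  also have "\<dots> = A $$ (Suc m, m) * cofactor A (Suc m) m + A $$ (Suc m, Suc m) * cofactor A (Suc m) (Suc m)"
    by (simp add: lessThan_Suc A_def tri_def)
  also have "A $$ (Suc m, Suc m) = a (Suc m)" by (simp add: A_def tri_def)
  also have "A $$ (Suc m, m) = b" by (simp add: A_def tri_def)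
  also have "mat_delete A (Suc m) (Suc m) = tri (Suc m) a b c"
    by (rule eq_matI) (auto simp: A_def tri_def mat_delete_def)
  hence "cofactor A (Suc m) (Suc m) = det (tri (Suc m) a b c)"
    by (simp add: cofactor_def)
  also have "cofactor A (Suc m) m = - c * det (tri m a b c)"
  proof -
    define M where "M = mat_delete A (Suc m) m"
    have M: "M \<in> carrier_mat (Suc m) (Suc m)" using A by (simp add: M_def mat_delete_def)
    have "det M = (\<Sum>i<Suc m. M $$ (i,m) * cofactor M i m)"
      by (rule laplace_expansion_column[OF M]) simp
    also have "\<dots> = M $$ (m,m) * cofactor M m m"
      by (simp add: lessThan_Suc M_def A_def tri_def mat_delete_def)
    also have "M $$ (m,m) = c" by (simp add: M_def A_def tri_def mat_delete_def)
    also have "mat_delete M m m = tri m a b c"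
      by (rule eq_matI) (auto simp: M_def A_def tri_def mat_delete_def)
    hence "cofactor M m m = det (tri m a b c)" by (simp add: cofactor_def)
    finally have "det M = c * det (tri m a b c)" .
    thus ?thesis by (simp add: cofactor_def M_def)
  qed
  finally show ?thesis by (simp add: A_def algebra_simps)
qed

lemma detP: "det (tri m (\<lambda>i. if i=0 then 2 else 1) (-1) 1) = of_nat (fib (m+2))"
proof (induction m rule: fib.induct)
  case 1 then show ?case by (simp add: tri_def)
next
  case 2 then show ?case by (simp add: det_single tri_def numeral_2_eq_2)
next
  case (3 m) then show ?case
    by (simp only: continuant) (simp add: numeral_2_eq_2)
qed

lemma detQ: "det (tri m (\<lambda>i. if i=0 then 2 else 3) (-1) (-1)) = of_nat (fib (2*m+1))"
proof (induction m rule: fib.induct)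
  case 1 then show ?case by (simp add: tri_def)
next
  case 2 then show ?case by (simp add: det_single tri_def numeral_3_eq_3 numeral_2_eq_2)
next
  case (3 m)
  have f: "fib (2*m+5) + fib (2*m+1) = 3 * fib (2*m+3)"
    by (simp add: numeral_3_eq_3 numeral_2_eq_2 eval_nat_numeral)
  have "of_nat (fib (2*m+5)) = (3::complex) * of_nat (fib (2*m+3)) - of_nat (fib (2*m+1))"
  proof -
    have "(of_nat (fib (2*m+5) + fib (2*m+1)) :: complex) = of_nat (3 * fib (2*m+3))" using f by simp
    thus ?thesis by (simp add: algebra_simps)
  qed
  with 3 show ?case
    by (simp only: continuant) (simp add: eval_nat_numeral algebra_simps)
qed

definition E :: "nat \<Rightarrow> complex mat" where
"E n = mat n n (\<lambda>(i,k). if k = i then 1 else if k+1 = i then -1 else 0)"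

lemma det_E: "det (E n) = 1"
proof -
  have d: "diag_mat (E n) = map (\<lambda>i. 1) [0..<n]"
    by (auto simp: E_def diag_mat_def)
  have "det (E n) = prod_list (diag_mat (E n))"
    by (rule det_lower_triangular[of n]) (auto simp: E_def)
  moreover have "prod_list (map (\<lambda>i. 1::complex) xs) = 1" for xs :: "nat list"
    by (induct xs) auto
  ultimately show ?thesis using d by simp
qed

lemma E_mult: assumes "A \<in> carrier_mat n n" "i < n" "j < n"
  shows "(E n * A) $$ (i,j) = A $$ (i,j) - (if i > 0 then A $$ (i-1,j) else 0)"
proof -
  have "(E n * A) $$ (i,j) = (\<Sum>k\<in>{0..<n}. (if k = i then A $$ (k,j) else 0) + (if k = i - 1 \<and> i > 0 then - A $$ (k,j) else 0))"
    using assms unfolding E_def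
    by (auto simp: scalar_prod_def intro!: sum.cong)
  also have "\<dots> = A $$ (i,j) - (if i > 0 then A $$ (i-1,j) else 0)"
    using assms by (simp add: sum.distrib sum.delta)
  finally show ?thesis .
qed

lemma C_carrier[simp]: "C_mat n t \<in> carrier_mat n n" by (simp add: C_mat_def)
lemma D_carrier[simp]: "D_mat n t \<in> carrier_mat n n" by (simp add: D_mat_def)

lemma EC: assumes "n = Suc (Suc k)"
  shows "E n * C_mat n t = tri n (\<lambda>i. if i=0 then 2 else if i = n-1 then t else 1) (-1) 1"
proof (rule eq_matI)
  fix i j assume ij: "i < dim_row (tri n (\<lambda>i. if i=0 then 2 else if i = n-1 then t else 1) (-1) 1)"
    "j < dim_col (tri n (\<lambda>i. if i=0 then 2 else if i = n-1 then t else 1) (-1) 1)"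
  hence i: "i < n" and j: "j < n" by (auto simp: tri_def)
  show "(E n * C_mat n t) $$ (i,j) = tri n (\<lambda>i. if i=0 then 2 else if i = n-1 then t else 1) (-1) 1 $$ (i,j)"
    using i j assms by (subst E_mult[OF C_carrier i j]) (auto simp: C_mat_def tri_def)
qed (auto simp: E_def tri_def C_mat_def)

lemma ED: assumes "n = Suc (Suc k)"
  shows "E n * D_mat n t = tri n (\<lambda>i. if i=0 then 2 else if i = n-1 then t+2 else 3) (-1) (-1)"
proof (rule eq_matI)
  fix i j assume ij: "i < dim_row (tri n (\<lambda>i. if i=0 then 2 else if i = n-1 then t+2 else 3) (-1) (-1))"
    "j < dim_col (tri n (\<lambda>i. if i=0 then 2 else if i = n-1 then t+2 else 3) (-1) (-1))"
  hence i: "i < n" and j: "j < n" by (auto simp: tri_def)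
  show "(E n * D_mat n t) $$ (i,j) = tri n (\<lambda>i. if i=0 then 2 else if i = n-1 then t+2 else 3) (-1) (-1) $$ (i,j)"
    using i j assms by (subst E_mult[OF D_carrier i j]) (auto simp: D_mat_def tri_def)
qed (auto simp: E_def tri_def D_mat_def)

lemma det_EA: assumes A: "A \<in> carrier_mat n n" shows "det (E n * A) = det A"
proof -
  have Ec: "E n \<in> carrier_mat n n" by (simp add: E_def)
  show ?thesis using det_mult[OF Ec A] det_E[of n] by simp
qed

lemma detC: assumes "n = Suc (Suc k)"
  shows "det (C_mat n t) = t * of_nat (fib (n+1)) + of_nat (fib n)"
proof -
  let ?a = "\<lambda>i. if i=0 then 2 else if i = n-1 then t else (1::complex)"
  let ?p = "\<lambda>i. if i=0 then 2 else (1::complex)"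
  have "det (C_mat n t) = det (tri n ?a (-1) 1)"
    using det_EA[OF C_carrier, of n t] EC[OF assms, of t] by simp
  also have "\<dots> = t * det (tri (Suc k) ?a (-1) 1) + det (tri k ?a (-1) 1)"
    using assms by (simp add: continuant)
  also have "tri (Suc k) ?a (-1) 1 = tri (Suc k) ?p (-1) 1"
    by (rule tri_cong) (use assms in auto)
  also have "tri k ?a (-1) 1 = tri k ?p (-1) 1"
    by (rule tri_cong) (use assms in auto)
  finally show ?thesis using assms by (simp add: detP)
qed

lemma detD: assumes "n = Suc (Suc k)"
  shows "det (D_mat n t) = t * of_nat (fib (2*n-1)) + of_nat (fib (2*n))"
proof -
  let ?a = "\<lambda>i. if i=0 then 2 else if i = n-1 then t+2 else (3::complex)"
  let ?p = "\<lambda>i. if i=0 then 2 else (3::complex)"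
  have "det (D_mat n t) = det (tri n ?a (-1) (-1))"
    using det_EA[OF D_carrier, of n t] ED[OF assms, of t] by simp
  also have "\<dots> = (t+2) * det (tri (Suc k) ?a (-1) (-1)) - det (tri k ?a (-1) (-1))"
    using assms by (simp add: continuant)
  also have "tri (Suc k) ?a (-1) (-1) = tri (Suc k) ?p (-1) (-1)"
    by (rule tri_cong) (use assms in auto)
  also have "tri k ?a (-1) (-1) = tri k ?p (-1) (-1)"
    by (rule tri_cong) (use assms in auto)
  finally have hD: "det (D_mat n t) = (t+2) * det (tri (Suc k) ?p (-1) (-1)) - det (tri k ?p (-1) (-1))" .
  have e1: "2 * Suc k + 1 = 2*k+3" by simp
  have q1: "det (tri (Suc k) ?p (-1) (-1)) = of_nat (fib (2*k+3))"
    using detQ[of "Suc k"] by (metis e1)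
  have q2: "det (tri k ?p (-1) (-1)) = of_nat (fib (2*k+1))"
    using detQ[of k] by simp
  have e3: "2*n-1 = 2*k+3" "2*n = 2*k+4" using assms by auto
  have "fib (2*k+4) + fib (2*k+1) = 2 * fib (2*k+3)"
    by (simp add: eval_nat_numeral)
  hence f4: "(of_nat (fib (2*k+4)) :: complex) = 2 * of_nat (fib (2*k+3)) - of_nat (fib (2*k+1))"
    by (metis (mono_tags, lifting) add_diff_cancel_right' of_nat_add of_nat_mult of_nat_numeral)
  have alg: "(t+2)*a - b = t*a + (2*a-b)" for a b :: complex by (simp add: algebra_simps)
  show ?thesis unfolding e3(1) unfolding e3(2) f4 hD q1 q2 by (rule alg)
qed

definition J :: "nat \<Rightarrow> complex mat" where
"J n = mat n n (\<lambda>(i,j). if i = j then (if i = 0 then -1 else 1) else 0)"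

lemma det_J: assumes "n \<ge> 1" shows "det (J n) = -1"
proof -
  have d: "diag_mat (J n) = (-1) # map (\<lambda>i. 1) [1..<n]"
    using assms by (auto simp: J_def diag_mat_def upt_conv_Cons)
  have "det (J n) = prod_list (diag_mat (J n))"
    by (rule det_lower_triangular[of n]) (auto simp: J_def)
  moreover have "prod_list (map (\<lambda>i. 1::complex) xs) = 1" for xs :: "nat list"
    by (induct xs) auto
  ultimately show ?thesis using d by simp
qed

lemma lorentz: assumes A: "A \<in> carrier_mat n n" and B: "B \<in> carrier_mat n n" and n: "n \<ge> 1"
  shows "lorentz_mult A B = A * J n * B"
proof (rule eq_matI)
  have AJ: "(A * J n) $$ (i,j) = A $$ (i,j) * (if j = 0 then -1 else 1)" if "i < n" "j < n" for i j
  proof -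
    have "(A * J n) $$ (i,j) = (\<Sum>k\<in>{0..<n}. A $$ (i,k) * J n $$ (k,j))"
      using that A by (simp add: J_def scalar_prod_def)
    also have "\<dots> = (\<Sum>k\<in>{0..<n}. if k = j then A $$ (i,j) * (if j = 0 then -1 else 1) else 0)"
      by (rule sum.cong) (auto simp: J_def that)
    finally
    show ?thesis using that by (simp add: sum.delta)
  qed
  fix i k assume "i < dim_row (A * J n * B)" "k < dim_col (A * J n * B)"
  hence i: "i < n" and k: "k < n" using A B by auto
  have "(A * J n * B) $$ (i,k) = (\<Sum>j\<in>{0..<n}. (A * J n) $$ (i,j) * B $$ (j,k))"
    using A B i k by (auto simp: J_def scalar_prod_def)
  also have "\<dots> = (\<Sum>j\<in>{0..<n}. A $$ (i,j) * (if j = 0 then -1 else 1) * B $$ (j,k))"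
    by (rule sum.cong) (auto simp: AJ i)
  also have "\<dots> = - A $$ (i,0) * B $$ (0,k) + (\<Sum>j\<in>{1..<n}. A $$ (i,j) * B $$ (j,k))"
    using n by (subst sum.atLeast_Suc_lessThan) auto
  finally show "lorentz_mult A B $$ (i,k) = (A * J n * B) $$ (i,k)"
    using A B i k by (simp add: lorentz_mult_def)
qed (use A B in \<open>auto simp: lorentz_mult_def\<close>)

lemma det_lorentz: assumes A: "A \<in> carrier_mat n n" and B: "B \<in> carrier_mat n n" and n: "n \<ge> 1"
  shows "det (lorentz_mult A B) = - det A * det B"
proof -
  have Jc: "J n \<in> carrier_mat n n" by (simp add: J_def)
  have "det (lorentz_mult A B) = det (A * J n) * det B"
    using lorentz[OF A B n] by (metis det_mult mult_carrier_mat A Jc B)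
  also have "\<dots> = - det A * det B" using det_mult[OF A Jc] det_J[OF n] by simp
  finally show ?thesis .
qed

theorem mainTheorem1:
  fixes n :: nat and t :: complex
  assumes "n \<ge> 1"
  shows "det (lorentz_mult (C_mat n t) (D_mat n t))
           = - (of_nat (fib (n+1)) * t + of_nat (fib n))
               * (of_nat (fib (2*n-1)) * t + of_nat (fib (2*n)))
       \<and> det (lorentz_mult (C_mat n t) (D_mat n t))
           = - of_nat (fib (n+1) * fib (2*n-1)) * t^2
             - of_nat (fib (n+1) * fib (2*n) + fib n * fib (2*n-1)) * t
             - of_nat (fib n * fib (2*n))"
proof -
  have L: "det (lorentz_mult (C_mat n t) (D_mat n t)) = - det (C_mat n t) * det (D_mat n t)"
    by (rule det_lorentz[OF C_carrier D_carrier assms])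
  have key: "det (lorentz_mult (C_mat n t) (D_mat n t))
           = - (of_nat (fib (n+1)) * t + of_nat (fib n))
               * (of_nat (fib (2*n-1)) * t + of_nat (fib (2*n)))"
  proof (cases "n = 1")
    case True
    have "det (C_mat n t) = t + 1" using True
      by (subst det_single[of _]) (auto simp: C_mat_def)
    moreover have "det (D_mat n t) = t + 1" using True
      by (subst det_single[of _]) (auto simp: D_mat_def)
    ultimately show ?thesis using True L by (simp add: algebra_simps numeral_2_eq_2)
  next
    case False
    then obtain k where k: "n = Suc (Suc k)" using assms
      by (metis One_nat_def Suc_le_D le_SucE)
    show ?thesis unfolding L detC[OF k] detD[OF k] by (simp add: algebra_simps)
  qed
  have alg: "- (a * t + b) * (c * t + d) = - (a*c) * t^2 - (a*d + b*c) * t - b*d" for a b c d :: complex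
    by (simp add: algebra_simps power2_eq_square)
  show ?thesis unfolding key of_nat_mult of_nat_add by (rule conjI[OF refl alg])
qed

end
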